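(* Consider an infinite execution $\gamma_0\gamma_1\ldots$ of the unison dynamics augmented with the infimum registers (as in the context), with $\gamma_0$ satisfying $WU_0$, in which every process increments its clock infinitely often; let $\bot_0$, $\widetilde{p^t.r}$ and $t_{p,k}$ be as in the context. Let $U$ be an integer with $U\delta\ge\bot_0+D+1$, and let $k\in\{1,\dots,\varrho\}$. Then for every $p\in V$, in the configuration $\gamma_{t_{p,U\delta+k}}$, $p.v_1=\bigoplus\{q.v_0: q\in V(p,k-1)\}$ and $p.v_2=\bigoplus\{q.v_0: q\in V(p,k)\}$.
   Context: Let $G=(V,E)$ be a finite connected undirected graph, $|V|=n\ge 2$, $\mathcal N_p$ the set of neighbors of $p$, $d(p,q)$ the hop distance, $D$ the diameter, and $V(p,r)=\{q\in V: d(p,q)\le r\}$. Fix integers $\varrho\ge1$, $\delta=\varrho+1$, and $M\ge3$ a multiple of $\delta$; for an integer $a$, $\bar a\in\{0,\dots,M-1\}$ is its residue modulo $M$. Each process $p$ holds a clock $p.r\in\{0,\dots,M-1\}$; $p^t.r$ is its value in $\gamma_t$. Integers $a,b$ are locally comparable if $\min(\overline{a-b},\overline{b-a})\le1$, and then $b\ominus a=\overline{b-a}$ if $\overline{b-a}\le1$, else $-\overline{a-b}$. $WU$: for every edge $\{p,q\}$, $p.r,q.r$ are locally comparable. The delay of a path $p_0\ldots p_k$ is $\sum_{i<k}(p_{i+1}.r\ominus p_i.r)$. $WU_0$: $WU$ holds and all paths between any $p,q$ have the same delay $\delta_{(p,q)}$ ($\delta^t_{(p,q)}$ in $\gamma_t$).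 Let $\oplus$ be an associative, commutative, idempotent binary operation on a set $\mathbb S$; $\bigoplus$ of a finite nonempty set is the $\oplus$ of its elements. Each process $p$ has registers $p.v_0,p.v_1,p.v_2\in\mathbb S$, where $p.v_0$ is never modified. Dynamics: $p$ is enabled iff for every $q\in\mathcal N_p$, $q.r=p.r$ or $q.r=\overline{p.r+1}$. In a transition $\gamma_t\to\gamma_{t+1}$ a nonempty set of processes enabled in $\gamma_t$ is chosen (by an arbitrary daemon); each chosen $p$, reading the values of $\gamma_t$, does: if $p.r\equiv\varrho \pmod\delta$ then $p.v_1:=p.v_0$, $p.v_2:=p.v_0$; otherwise $p.v_1:=p.v_2$ and $p.v_2:=p.v_0\oplus\bigoplus\{q.v_{\omega(q)}:q\in\mathcal N_p\}$, where $\omega(q)=2$ if $q.r=p.r$ and $\omega(q)=1$ if $q.r=\overline{p.r+1}$; then $p.r:=\overline{p.r+1}$. Other processes are unchanged. Lifting: choose $p_0$ with $\delta^0_{(p_0,q)}\ge0$ for all $q$, let $\bot_0=p_0^0.r$, set $\widetilde{p^0.r}=\bot_0+\delta^0_{(p_0,p)}$, and $\widetilde{p^{t+1}.r}=\widetilde{p^t.r}+1$ if $p$ increments in $\gamma_t\to\gamma_{t+1}$, else $\widetilde{p^{t+1}.r}=\widetilde{p^t.r}$. For an integer $k$, $t_{p,k}$ is the smallest $t$ with $\widetilde{p^t.r}=k$. *)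

theory Defs
  imports Main
begin

definition graph_ok :: "'a set \<Rightarrow> ('a \<Rightarrow> 'a \<Rightarrow> bool) \<Rightarrow> bool" where
  "graph_ok V E \<longleftrightarrow> finite V \<and> card V \<ge> 2 \<and>
     (\<forall>p q. E p q \<longrightarrow> p \<in> V \<and> q \<in> V) \<and> (\<forall>p q. E p q \<longrightarrow> E q p) \<and> (\<forall>p. \<not> E p p)"

definition nbrs :: "'a set \<Rightarrow> ('a \<Rightarrow> 'a \<Rightarrow> bool) \<Rightarrow> 'a \<Rightarrow> 'a set" where
  "nbrs V E p = {q \<in> V. E p q}"

definition is_path :: "'a set \<Rightarrow> ('a \<Rightarrow> 'a \<Rightarrow> bool) \<Rightarrow> 'a \<Rightarrow> 'a \<Rightarrow> 'a list \<Rightarrow> bool" where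
  "is_path V E p q xs \<longleftrightarrow> xs \<noteq> [] \<and> hd xs = p \<and> last xs = q \<and> set xs \<subseteq> V \<and> successively E xs"

definition connected_graph :: "'a set \<Rightarrow> ('a \<Rightarrow> 'a \<Rightarrow> bool) \<Rightarrow> bool" where
  "connected_graph V E \<longleftrightarrow> (\<forall>p\<in>V. \<forall>q\<in>V. \<exists>xs. is_path V E p q xs)"

definition hop_dist :: "'a set \<Rightarrow> ('a \<Rightarrow> 'a \<Rightarrow> bool) \<Rightarrow> 'a \<Rightarrow> 'a \<Rightarrow> nat" where
  "hop_dist V E p q = (LEAST k. \<exists>xs. is_path V E p q xs \<and> length xs = k + 1)"

definition diameter :: "'a set \<Rightarrow> ('a \<Rightarrow> 'a \<Rightarrow> bool) \<Rightarrow> nat" where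
  "diameter V E = Max {hop_dist V E p q | p q. p \<in> V \<and> q \<in> V}"

definition ball :: "'a set \<Rightarrow> ('a \<Rightarrow> 'a \<Rightarrow> bool) \<Rightarrow> 'a \<Rightarrow> nat \<Rightarrow> 'a set" where
  "ball V E p r = {q \<in> V. hop_dist V E p q \<le> r}"

definition loc_comp :: "int \<Rightarrow> int \<Rightarrow> int \<Rightarrow> bool" where
  "loc_comp M a b \<longleftrightarrow> min ((a - b) mod M) ((b - a) mod M) \<le> 1"

definition ominus :: "int \<Rightarrow> int \<Rightarrow> int \<Rightarrow> int" where
  "ominus M b a = (if (b - a) mod M \<le> 1 then (b - a) mod M else - ((a - b) mod M))"

definition delay :: "int \<Rightarrow> ('a \<Rightarrow> int) \<Rightarrow> 'a list \<Rightarrow> int" where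
  "delay M r xs = sum_list (map (\<lambda>(a, b). ominus M (r b) (r a)) (zip xs (tl xs)))"

definition WU :: "int \<Rightarrow> ('a \<Rightarrow> 'a \<Rightarrow> bool) \<Rightarrow> ('a \<Rightarrow> int) \<Rightarrow> bool" where
  "WU M E r \<longleftrightarrow> (\<forall>p q. E p q \<longrightarrow> loc_comp M (r p) (r q))"

definition WU0 :: "int \<Rightarrow> 'a set \<Rightarrow> ('a \<Rightarrow> 'a \<Rightarrow> bool) \<Rightarrow> ('a \<Rightarrow> int) \<Rightarrow> bool" where
  "WU0 M V E r \<longleftrightarrow> WU M E r \<and>
     (\<forall>p\<in>V. \<forall>q\<in>V. \<forall>xs ys. is_path V E p q xs \<longrightarrow> is_path V E p q ys \<longrightarrow> delay M r xs = delay M r ys)"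

(* the common delay \<delta>_(p,q) (meaningful under WU0) *)
definition pdelay :: "int \<Rightarrow> 'a set \<Rightarrow> ('a \<Rightarrow> 'a \<Rightarrow> bool) \<Rightarrow> ('a \<Rightarrow> int) \<Rightarrow> 'a \<Rightarrow> 'a \<Rightarrow> int" where
  "pdelay M V E r p q = delay M r (SOME xs. is_path V E p q xs)"

(* \<Oplus> of a finite nonempty set, for an associative commutative idempotent operation *)
definition bigop :: "('s \<Rightarrow> 's \<Rightarrow> 's) \<Rightarrow> 's set \<Rightarrow> 's" where
  "bigop f A = semilattice_set.F f A"

definition enabled :: "int \<Rightarrow> 'a set \<Rightarrow> ('a \<Rightarrow> 'a \<Rightarrow> bool) \<Rightarrow> ('a \<Rightarrow> int) \<Rightarrow> 'a \<Rightarrow> bool" where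
  "enabled M V E r p \<longleftrightarrow> (\<forall>q \<in> nbrs V E p. r q = r p \<or> r q = (r p + 1) mod M)"

definition step ::
  "int \<Rightarrow> int \<Rightarrow> 'a set \<Rightarrow> ('a \<Rightarrow> 'a \<Rightarrow> bool) \<Rightarrow> ('s \<Rightarrow> 's \<Rightarrow> 's) \<Rightarrow> ('a \<Rightarrow> 's)
   \<Rightarrow> ('a \<Rightarrow> int) \<Rightarrow> ('a \<Rightarrow> 's) \<Rightarrow> ('a \<Rightarrow> 's) \<Rightarrow> 'a set
   \<Rightarrow> ('a \<Rightarrow> int) \<Rightarrow> ('a \<Rightarrow> 's) \<Rightarrow> ('a \<Rightarrow> 's) \<Rightarrow> bool" where
  "step M rho V E f v0 r v1 v2 S r' v1' v2' \<longleftrightarrow>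
     S \<noteq> {} \<and> S \<subseteq> V \<and> (\<forall>p\<in>S. enabled M V E r p) \<and>
     (\<forall>p. if p \<in> S then
            r' p = (r p + 1) mod M \<and>
            (if r p mod (rho + 1) = rho
             then v1' p = v0 p \<and> v2' p = v0 p
             else v1' p = v2 p \<and>
                  v2' p = f (v0 p) (bigop f ((\<lambda>q. if r q = r p then v2 q else v1 q) ` nbrs V E p)))
          else r' p = r p \<and> v1' p = v1 p \<and> v2' p = v2 p)"

primrec lifted :: "('a \<Rightarrow> int) \<Rightarrow> (nat \<Rightarrow> 'a set) \<Rightarrow> nat \<Rightarrow> 'a \<Rightarrow> int" where
  "lifted init act 0 p = init p"
| "lifted init act (Suc t) p = lifted init act t p + (if p \<in> act t then 1 else 0)"

definition first_time :: "('a \<Rightarrow> int) \<Rightarrow> (nat \<Rightarrow> 'a set) \<Rightarrow> 'a \<Rightarrow> int \<Rightarrow> nat" where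
  "first_time init act p k = (LEAST t. lifted init act t p = k)"

end

theory Submission
  imports Defs
begin

lemma delay_single[simp]: "delay M r [x] = 0" by (simp add: delay_def)
lemma delay_cons2: "delay M r (x#y#xs) = ominus M (r y) (r x) + delay M r (y#xs)"
  by (simp add: delay_def)

lemma delay_snoc: "xs \<noteq> [] \<Longrightarrow> delay M r (xs@[b]) = delay M r xs + ominus M (r b) (r (last xs))"
proof (induction xs)
  case Nil then show ?case by simp
next
  case (Cons x xs)
  show ?case
  proof (cases xs)
    case Nil then show ?thesis by (simp add: delay_cons2)
  next
    case (Cons y ys)
    then show ?thesis using Cons.IH by (simp add: delay_cons2)
  qed
qed

lemma ominus_mod: "ominus M b a mod M = (b - a) mod M"
proof -
  have "(- ((a - b) mod M)) mod M = (b - a) mod M"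
    by (metis minus_diff_eq mod_minus_eq)
  then show ?thesis by (simp add: ominus_def)
qed

lemma ominus_le1: assumes "M > 0" shows "ominus M b a \<le> 1"
proof -
  have "0 \<le> (a-b) mod M" by (rule pos_mod_sign[OF assms])
  then show ?thesis unfolding ominus_def by auto
qed

lemma ominus_ge: assumes "M > 0" "loc_comp M a b" shows "ominus M b a \<ge> -1"
proof -
  have "0 \<le> (a-b) mod M" "0 \<le> (b-a) mod M" by (rule pos_mod_sign[OF assms(1)])+
  moreover have "(a-b) mod M \<le> 1 \<or> (b-a) mod M \<le> 1" using assms(2) unfolding loc_comp_def
    by linarith
  ultimately show ?thesis unfolding ominus_def by auto
qed

lemma delay_mod: "xs \<noteq> [] \<Longrightarrow> delay M r xs mod M = (r (last xs) - r (hd xs)) mod M"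
proof (induction xs)
  case Nil then show ?case by simp
next
  case (Cons x xs)
  show ?case
  proof (cases xs)
    case Nil then show ?thesis by simp
  next
    case (Cons y ys)
    have hy: "hd xs = y" "xs \<noteq> []" using Cons by auto
    have d: "delay M r (x#xs) = ominus M (r y) (r x) + delay M r xs"
      using Cons by (simp add: delay_cons2)
    have "delay M r (x#xs) mod M = (ominus M (r y) (r x) mod M + delay M r xs mod M) mod M"
      unfolding d by (rule mod_add_eq[symmetric])
    also have "\<dots> = ((r y - r x) mod M + (r (last xs) - r y) mod M) mod M"
      using Cons.IH[OF hy(2)] hy(1) by (simp only: ominus_mod)
    also have "\<dots> = ((r y - r x) + (r (last xs) - r y)) mod M" by (rule mod_add_eq)
    also have "\<dots> = (r (last (x#xs)) - r (hd (x#xs))) mod M" using hy by simp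
    finally show ?thesis .
  qed
qed

lemma delay_le: "M > 0 \<Longrightarrow> xs \<noteq> [] \<Longrightarrow> delay M r xs \<le> int (length xs) - 1"
proof (induction xs)
  case Nil then show ?case by simp
next
  case (Cons x xs)
  show ?case
  proof (cases xs)
    case Nil then show ?thesis by simp
  next
    case (Cons y ys)
    then show ?thesis using Cons.IH ominus_le1[of M "r y" "r x"] Cons.prems by (simp add: delay_cons2)
  qed
qed

lemma is_path_snoc: "is_path V E p a xs \<Longrightarrow> E a b \<Longrightarrow> b \<in> V \<Longrightarrow> is_path V E p b (xs@[b])"
  by (auto simp: is_path_def successively_append_iff)

lemma hop_le_iff:
  assumes "\<exists>xs. is_path V E p q xs"
  shows "hop_dist V E p q \<le> m \<longleftrightarrow> (\<exists>xs. is_path V E p q xs \<and> length xs \<le> m+1)"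
proof
  assume h: "hop_dist V E p q \<le> m"
  from assms obtain xs where xs: "is_path V E p q xs" by blast
  then have ne: "xs \<noteq> []" by (simp add: is_path_def)
  have "\<exists>k xs. is_path V E p q xs \<and> length xs = k + 1"
    using xs ne by (intro exI[of _ "length xs - 1"] exI[of _ xs]) auto
  then have "\<exists>ys. is_path V E p q ys \<and> length ys = hop_dist V E p q + 1"
    unfolding hop_dist_def by (rule LeastI_ex)
  then show "\<exists>xs. is_path V E p q xs \<and> length xs \<le> m+1" using h by auto
next
  assume "\<exists>xs. is_path V E p q xs \<and> length xs \<le> m+1"
  then obtain xs where xs: "is_path V E p q xs" "length xs \<le> m+1" by blast
  then have ne: "xs \<noteq> []" by (simp add: is_path_def)
  have "hop_dist V E p q \<le> length xs - 1"
    unfolding hop_dist_def by (rule Least_le) (use xs ne in auto)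
  then show "hop_dist V E p q \<le> m" using xs by auto
qed

lemma ball_0: "connected_graph V E \<Longrightarrow> p \<in> V \<Longrightarrow> ball V E p 0 = {p}"
proof -
  assume conn: "connected_graph V E" and p: "p \<in> V"
  have "q \<in> ball V E p 0 \<longleftrightarrow> q = p" for q
  proof
    assume "q \<in> ball V E p 0"
    then have "q \<in> V" "hop_dist V E p q \<le> 0" by (auto simp: ball_def)
    moreover have "is_path V E p q xs \<Longrightarrow> length xs \<le> 1 \<Longrightarrow> q = p" for xs
      by (cases xs) (auto simp: is_path_def)
    moreover have "\<exists>xs. is_path V E p q xs \<and> length xs \<le> 0+1"
      using hop_le_iff[of V E p q 0] calculation(1,2) conn p unfolding connected_graph_def by blast
    ultimately show "q = p" by auto
  next
    assume "q = p"
    moreover have "is_path V E p p [p]" using p by (simp add: is_path_def)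
    moreover have "hop_dist V E p p \<le> 0"
      using hop_le_iff[of V E p p 0] calculation(2) by fastforce
    ultimately show "q \<in> ball V E p 0" using p by (auto simp: ball_def)
  qed
  then show ?thesis by blast
qed

lemma ball_mem:
  assumes conn: "connected_graph V E" and a: "a \<in> V" and b: "b \<in> V"
  shows "b \<in> ball V E a n \<longleftrightarrow> (\<exists>xs. is_path V E a b xs \<and> length xs \<le> n+1)"
proof -
  have "\<exists>xs. is_path V E a b xs" using conn a b unfolding connected_graph_def by blast
  then have "hop_dist V E a b \<le> n \<longleftrightarrow> (\<exists>xs. is_path V E a b xs \<and> length xs \<le> n+1)"
    by (rule hop_le_iff)
  moreover have "b \<in> ball V E a n \<longleftrightarrow> hop_dist V E a b \<le> n" using b unfolding ball_def by blast
  ultimately show ?thesis by blast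
qed

lemma ball_sub: "ball V E a n \<subseteq> V" unfolding ball_def by blast

lemma ball_self: assumes conn: "connected_graph V E" and a: "a \<in> V" shows "a \<in> ball V E a n"
proof -
  have "a \<in> ball V E a 0" using ball_0[OF conn a] by blast
  then have "hop_dist V E a a \<le> n" unfolding ball_def by simp
  then show ?thesis using a unfolding ball_def by blast
qed

lemma ball_Suc:
  assumes conn: "connected_graph V E" and p: "p \<in> V"
  shows "ball V E p (Suc m) = insert p (\<Union>q\<in>nbrs V E p. ball V E q m)"
proof (intro equalityI subsetI)
  fix x assume x: "x \<in> ball V E p (Suc m)"
  then have xV: "x \<in> V" by (rule subsetD[OF ball_sub])
  then obtain xs where xs: "is_path V E p x xs" "length xs \<le> Suc m + 1"
    using ball_mem[OF conn p xV] x by blast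
  have ne: "xs \<noteq> []" and hd: "hd xs = p" and lx: "last xs = x" and sV: "set xs \<subseteq> V"
    and sx: "successively E xs" using xs(1) unfolding is_path_def by blast+
  define ys where "ys = tl xs"
  have xsys: "xs = p # ys" unfolding ys_def using ne hd by (metis list.collapse)
  show "x \<in> insert p (\<Union>q\<in>nbrs V E p. ball V E q m)"
  proof (cases "ys = []")
    case True then have "x = p" using lx xsys by simp
    then show ?thesis by blast
  next
    case False
    have E: "E p (hd ys)" and sy: "successively E ys"
      using sx False unfolding xsys successively_Cons by blast+
    have hV: "hd ys \<in> V" using sV hd_in_set[OF False] unfolding xsys by auto
    have ly: "last ys = x" using lx False unfolding xsys by simp
    have "set ys \<subseteq> V" using sV unfolding xsys by simp
    then have "is_path V E (hd ys) x ys" using False ly sy unfolding is_path_def by blast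
    moreover have "length ys \<le> m + 1" using xs(2) unfolding xsys by simp
    ultimately have "x \<in> ball V E (hd ys) m" using ball_mem[OF conn hV xV] by blast
    moreover have "hd ys \<in> nbrs V E p" using E hV unfolding nbrs_def by blast
    ultimately show ?thesis by blast
  qed
next
  fix x assume x: "x \<in> insert p (\<Union>q\<in>nbrs V E p. ball V E q m)"
  show "x \<in> ball V E p (Suc m)"
  proof (cases "x = p")
    case True then show ?thesis using ball_self[OF conn p] by blast
  next
    case False
    then obtain q where q: "q \<in> nbrs V E p" "x \<in> ball V E q m" using x by blast
    have qV: "q \<in> V" "E p q" using q(1) unfolding nbrs_def by blast+
    have xV: "x \<in> V" using q(2) by (rule subsetD[OF ball_sub])
    obtain ys where ys: "is_path V E q x ys" "length ys \<le> m+1"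
      using ball_mem[OF conn qV(1) xV] q(2) by blast
    have yne: "ys \<noteq> []" and yh: "hd ys = q" and yl: "last ys = x" and yV: "set ys \<subseteq> V"
      and ysu: "successively E ys" using ys(1) unfolding is_path_def by blast+
    have "successively E (p # ys)" using ysu yh yne qV(2) unfolding successively_Cons by blast
    moreover have "set (p # ys) \<subseteq> V" using yV p by simp
    moreover have "last (p # ys) = x" using yl yne by simp
    ultimately have "is_path V E p x (p # ys)" unfolding is_path_def by simp
    moreover have "length (p # ys) \<le> Suc m + 1" using ys(2) by simp
    ultimately show ?thesis using ball_mem[OF conn p xV] by blast
  qed
qed

lemma bigop_UN:
  assumes semi: "semilattice f" and "finite I" "I \<noteq> {}" "\<forall>i\<in>I. finite (A i) \<and> A i \<noteq> {}"
  shows "bigop f (g ` (\<Union>i\<in>I. A i)) = bigop f ((\<lambda>i. bigop f (g ` A i)) ` I)"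
  using assms(2,3,4)
proof (induction I rule: finite_ne_induct)
  case (singleton x) then show ?case
    using semilattice_set.singleton[of f] semi by (simp add: bigop_def semilattice_set_def)
next
  case (insert x F)
  interpret S: semilattice_set f using semi by (simp add: semilattice_set_def)
  have "bigop f (g ` (\<Union>i\<in>insert x F. A i)) = bigop f (g ` A x \<union> g ` (\<Union>i\<in>F. A i))"
    by (simp add: image_Un)
  also have "\<dots> = f (bigop f (g ` A x)) (bigop f (g ` (\<Union>i\<in>F. A i)))"
    unfolding bigop_def using insert by (intro S.union) auto
  also have "\<dots> = f (bigop f (g ` A x)) (bigop f ((\<lambda>i. bigop f (g ` A i)) ` F))"
    using insert by simp
  also have "\<dots> = bigop f ((\<lambda>i. bigop f (g ` A i)) ` insert x F)"
    unfolding bigop_def using insert by simp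
  finally show ?case .
qed

lemma B_Suc:
  assumes semi: "semilattice f" and conn: "connected_graph V E" and fin: "finite V"
    and p: "p \<in> V" and ne: "nbrs V E p \<noteq> {}"
  shows "bigop f (v0 ` ball V E p (Suc m)) = f (v0 p) (bigop f ((\<lambda>q. bigop f (v0 ` ball V E q m)) ` nbrs V E p))"
proof -
  interpret S: semilattice_set f using semi by (simp add: semilattice_set_def)
  have nV: "nbrs V E p \<subseteq> V" by (auto simp: nbrs_def)
  have fn: "finite (nbrs V E p)" using nV fin by (rule finite_subset)
  have bq: "\<forall>q\<in>nbrs V E p. finite (ball V E q m) \<and> ball V E q m \<noteq> {}"
  proof
    fix q assume "q \<in> nbrs V E p"
    then have "q \<in> V" using nV by blast
    then have "q \<in> ball V E q m" by (rule ball_self[OF conn])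
    moreover have "finite (ball V E q m)" using ball_sub[of V E q m] fin by (rule finite_subset)
    ultimately show "finite (ball V E q m) \<and> ball V E q m \<noteq> {}" by blast
  qed
  have "bigop f (v0 ` ball V E p (Suc m)) = bigop f (insert (v0 p) (v0 ` (\<Union>q\<in>nbrs V E p. ball V E q m)))"
    using ball_Suc[OF conn p] by simp
  also have "\<dots> = f (v0 p) (bigop f (v0 ` (\<Union>q\<in>nbrs V E p. ball V E q m)))"
    unfolding bigop_def using bq fn ne by (intro S.insert) auto
  also have "\<dots> = f (v0 p) (bigop f ((\<lambda>q. bigop f (v0 ` ball V E q m)) ` nbrs V E p))"
    using bigop_UN[OF semi fn ne bq] by simp
  finally show ?thesis .
qed

lemma nbrs_ne:
  assumes "graph_ok V E" "connected_graph V E" "p \<in> V"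
  shows "nbrs V E p \<noteq> {}"
proof -
  have "finite V" "card V \<ge> 2" using assms(1) by (auto simp: graph_ok_def)
  obtain q where q: "q \<in> V" "q \<noteq> p"
  proof (rule ccontr)
    assume "\<not> thesis"
    then have "V \<subseteq> {p}" using that by blast
    then have "card V \<le> 1" using card_mono[of "{p}" V] by simp
    then show False using \<open>card V \<ge> 2\<close> by simp
  qed
  obtain xs where xs: "is_path V E p q xs" using assms(2,3) q by (auto simp: connected_graph_def)
  then obtain ys where ys: "xs = p # ys" by (cases xs) (auto simp: is_path_def)
  have "ys \<noteq> []" using xs ys q by (auto simp: is_path_def)
  then have "E p (hd ys)" "hd ys \<in> V" using xs ys by (auto simp: is_path_def successively_Cons)
  then show ?thesis by (auto simp: nbrs_def)
qed



lemma step_parts: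
  assumes "step M rho V E f v0 r v1 v2 S r' v1' v2'"
  shows "S \<subseteq> V" "\<forall>p\<in>S. enabled M V E r p"
    "\<And>p. p \<notin> S \<Longrightarrow> r' p = r p \<and> v1' p = v1 p \<and> v2' p = v2 p"
    "\<And>p. p \<in> S \<Longrightarrow> r' p = (r p + 1) mod M"
    "\<And>p. p \<in> S \<Longrightarrow> r p mod (rho+1) = rho \<Longrightarrow> v1' p = v0 p \<and> v2' p = v0 p"
    "\<And>p. p \<in> S \<Longrightarrow> r p mod (rho+1) \<noteq> rho \<Longrightarrow> v1' p = v2 p \<and>
        v2' p = f (v0 p) (bigop f ((\<lambda>q. if r q = r p then v2 q else v1 q) ` nbrs V E p))"
proof -
  note h = assms[unfolded step_def]
  show "S \<subseteq> V" "\<forall>p\<in>S. enabled M V E r p" using h by blast+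
  note g = h[THEN conjunct2, THEN conjunct2, THEN conjunct2]
  fix p
  show "p \<notin> S \<Longrightarrow> r' p = r p \<and> v1' p = v1 p \<and> v2' p = v2 p" using g[rule_format, of p] by simp
  show "p \<in> S \<Longrightarrow> r' p = (r p + 1) mod M" using g[rule_format, of p] by simp
  show "p \<in> S \<Longrightarrow> r p mod (rho+1) = rho \<Longrightarrow> v1' p = v0 p \<and> v2' p = v0 p"
    using g[rule_format, of p] by simp
  show "p \<in> S \<Longrightarrow> r p mod (rho+1) \<noteq> rho \<Longrightarrow> v1' p = v2 p \<and>
        v2' p = f (v0 p) (bigop f ((\<lambda>q. if r q = r p then v2 q else v1 q) ` nbrs V E p))"
    using g[rule_format, of p] by simp
qed

lemma nb_arith:
  fixes x y M :: int
  assumes M: "M \<ge> 3" and d: "\<bar>y - x\<bar> \<le> 1"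
    and e: "y mod M = x mod M \<or> y mod M = (x mod M + 1) mod M"
  shows "y = x \<or> y = x + 1"
proof (rule ccontr)
  assume a: "\<not> ?thesis"
  have "y - x \<le> 1" "x - y \<le> 1" using d by (simp_all add: abs_le_iff)
  then have y: "y = x - 1" using a by linarith
  have e2: "(x mod M + 1) mod M = (x + 1) mod M" by (rule mod_add_left_eq)
  show False
  proof (cases "y mod M = x mod M")
    case True
    then have "M dvd y - x" by (simp only: mod_eq_dvd_iff)
    moreover have "y - x = - 1" using y by simp
    ultimately have "M dvd 1" by simp
    then show False using M zdvd_imp_le[of M 1] by simp
  next
    case False
    then have "y mod M = (x + 1) mod M" using e e2 by simp
    then have "M dvd y - (x + 1)" by (simp only: mod_eq_dvd_iff)
    moreover have "y - (x + 1) = - 2" using y by simp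
    ultimately have "M dvd 2" by simp
    then show False using M zdvd_imp_le[of M 2] by simp
  qed
qed

lemma neq_arith:
  fixes x M :: int
  assumes "M \<ge> 3"
  shows "(x + 1) mod M \<noteq> x mod M"
proof
  assume "(x + 1) mod M = x mod M"
  then have "M dvd (x + 1) - x" by (simp only: mod_eq_dvd_iff)
  then have "M dvd 1" by simp
  then show False using assms zdvd_imp_le[of M 1] by simp
qed
lemma lifted_mono: "t \<le> t' \<Longrightarrow> lifted init act t p \<le> lifted init act t' p"
proof (induction t' rule: dec_induct)
  case base then show ?case by simp
next
  case (step n) then show ?case by simp
qed

lemma lifted_Suc_le: "lifted init act (Suc t) p \<le> lifted init act t p + 1"
  by simp

theorem mainTheorem5:
  fixes V :: "'a set" and E :: "'a \<Rightarrow> 'a \<Rightarrow> bool"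
    and f :: "'s \<Rightarrow> 's \<Rightarrow> 's" and v0 :: "'a \<Rightarrow> 's"
    and r :: "nat \<Rightarrow> 'a \<Rightarrow> int" and v1 v2 :: "nat \<Rightarrow> 'a \<Rightarrow> 's"
    and act :: "nat \<Rightarrow> 'a set"
    and rho M U :: int and k :: nat and p0 p :: 'a
  assumes graph: "graph_ok V E" and conn: "connected_graph V E"
    and rho: "rho \<ge> 1" and M3: "M \<ge> 3" and Mdvd: "(rho + 1) dvd M"
    and semi: "semilattice f"
    and init_range: "\<forall>q\<in>V. 0 \<le> r 0 q \<and> r 0 q < M"
    and exec: "\<forall>t. step M rho V E f v0 (r t) (v1 t) (v2 t) (act t) (r (Suc t)) (v1 (Suc t)) (v2 (Suc t))"
    and WU0: "WU0 M V E (r 0)"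
    and fair: "\<forall>q\<in>V. \<forall>t. \<exists>t'\<ge>t. q \<in> act t'"
    and p0: "p0 \<in> V" "\<forall>q\<in>V. pdelay M V E (r 0) p0 q \<ge> 0"
    and U: "U * (rho + 1) \<ge> r 0 p0 + int (diameter V E) + 1"
    and k: "1 \<le> k" "int k \<le> rho"
    and p: "p \<in> V"
  shows "let init = (\<lambda>q. r 0 p0 + pdelay M V E (r 0) p0 q);
             T = first_time init act p (U * (rho + 1) + int k)
         in v1 T p = bigop f (v0 ` ball V E p (k - 1)) \<and>
            v2 T p = bigop f (v0 ` ball V E p k)"
proof -
  define init where "init = (\<lambda>q. r 0 p0 + pdelay M V E (r 0) p0 q)"
  define L where "L = lifted init act"
  define B where "B = (\<lambda>q (j::nat). bigop f (v0 ` ball V E q j))"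
  define D where "D = diameter V E"
  define W where "W = U * (rho + 1)"
  have M0: "M > 0" using M3 by simp
  have finV: "finite V" using graph unfolding graph_ok_def by blast
  have EV: "\<And>a b. E a b \<Longrightarrow> a \<in> V \<and> b \<in> V" using graph unfolding graph_ok_def by blast
  have Esym: "\<And>a b. E a b \<Longrightarrow> E b a" using graph unfolding graph_ok_def by blast
  have WU: "WU M E (r 0)" and WUp: "\<And>a b xs ys. a \<in> V \<Longrightarrow> b \<in> V \<Longrightarrow> is_path V E a b xs \<Longrightarrow>
      is_path V E a b ys \<Longrightarrow> delay M (r 0) xs = delay M (r 0) ys"
    using WU0 unfolding WU0_def by blast+
  define P where "P = (\<lambda>q. SOME xs. is_path V E p0 q xs)"
  have P: "\<And>q. q \<in> V \<Longrightarrow> is_path V E p0 q (P q)"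
  proof -
    fix q assume q: "q \<in> V"
    have "\<exists>xs. is_path V E p0 q xs" using conn p0(1) q unfolding connected_graph_def by blast
    then show "is_path V E p0 q (P q)" unfolding P_def by (rule someI_ex)
  qed
  have initP: "\<And>q. init q = r 0 p0 + delay M (r 0) (P q)"
    unfolding init_def pdelay_def P_def by simp
  have init_mod: "\<And>q. q \<in> V \<Longrightarrow> init q mod M = r 0 q"
  proof -
    fix q assume q: "q \<in> V"
    have pq: "P q \<noteq> []" "hd (P q) = p0" "last (P q) = q" using P[OF q] unfolding is_path_def by blast+
    have "init q mod M = (r 0 p0 + delay M (r 0) (P q) mod M) mod M"
      unfolding initP by (rule mod_add_right_eq[symmetric])
    also have "\<dots> = (r 0 p0 + (r 0 q - r 0 p0) mod M) mod M"
      using delay_mod[OF pq(1), of M "r 0"] pq by simp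
    also have "\<dots> = (r 0 p0 + (r 0 q - r 0 p0)) mod M" by (rule mod_add_right_eq)
    also have "\<dots> = r 0 q mod M" by simp
    also have "\<dots> = r 0 q" using init_range q by simp
    finally show "init q mod M = r 0 q" .
  qed
  have init_nb: "\<And>a b. E a b \<Longrightarrow> \<bar>init b - init a\<bar> \<le> 1"
  proof -
    fix a b assume ab: "E a b"
    have aV: "a \<in> V" and bV: "b \<in> V" using EV[OF ab] by blast+
    have pa: "P a \<noteq> []" "last (P a) = a" using P[OF aV] unfolding is_path_def by blast+
    have "is_path V E p0 b (P a @ [b])" using is_path_snoc[OF P[OF aV] ab bV] .
    then have "delay M (r 0) (P b) = delay M (r 0) (P a @ [b])"
      using WUp[OF p0(1) bV P[OF bV]] by blast
    also have "\<dots> = delay M (r 0) (P a) + ominus M (r 0 b) (r 0 a)"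
      using delay_snoc[OF pa(1), of M "r 0" b] pa(2) by simp
    finally have "init b - init a = ominus M (r 0 b) (r 0 a)" unfolding initP by simp
    moreover have "loc_comp M (r 0 a) (r 0 b)" using WU ab unfolding WU_def by blast
    ultimately show "\<bar>init b - init a\<bar> \<le> 1"
      using ominus_le1[OF M0, of "r 0 b" "r 0 a"] ominus_ge[OF M0, of "r 0 a" "r 0 b"] by simp
  qed
  have init_le: "\<And>q. q \<in> V \<Longrightarrow> init q \<le> r 0 p0 + int D"
  proof -
    fix q assume q: "q \<in> V"
    have "\<exists>xs. is_path V E p0 q xs" using P[OF q] by blast
    then obtain ys where ys: "is_path V E p0 q ys" "length ys \<le> hop_dist V E p0 q + 1"
      using hop_le_iff[of V E p0 q "hop_dist V E p0 q"] by blast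
    have yne: "ys \<noteq> []" using ys(1) unfolding is_path_def by blast
    have "delay M (r 0) (P q) = delay M (r 0) ys" using WUp[OF p0(1) q P[OF q] ys(1)] .
    also have "\<dots> \<le> int (length ys) - 1" by (rule delay_le[OF M0 yne])
    also have "\<dots> \<le> int (hop_dist V E p0 q)" using ys(2) by simp
    also have "\<dots> \<le> int D"
    proof -
      have fin: "finite {hop_dist V E a b |a b. a \<in> V \<and> b \<in> V}"
        using finite_image_set2[of "\<lambda>a. a \<in> V" "\<lambda>b. b \<in> V" "hop_dist V E"] finV by simp
      have "hop_dist V E p0 q \<in> {hop_dist V E a b |a b. a \<in> V \<and> b \<in> V}" using p0(1) q by blast
      then have "hop_dist V E p0 q \<le> D" unfolding D_def diameter_def using fin by (simp add: Max_ge)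
      then show ?thesis by simp
    qed
    finally show "init q \<le> r 0 p0 + int D" unfolding initP by simp
  qed
  have st: "\<And>t. step M rho V E f v0 (r t) (v1 t) (v2 t) (act t) (r (Suc t)) (v1 (Suc t)) (v2 (Suc t))"
    using exec by blast
  have actV: "\<And>t. act t \<subseteq> V" using step_parts(1)[OF st] .
  have Lsuc: "\<And>t q. L (Suc t) q = L t q + (if q \<in> act t then 1 else 0)" unfolding L_def by simp
  have L0: "\<And>q. L 0 q = init q" unfolding L_def by simp
  have inv1: "\<And>t. (\<forall>q\<in>V. L t q mod M = r t q) \<and> (\<forall>a b. E a b \<longrightarrow> \<bar>L t b - L t a\<bar> \<le> 1)"
  proof -
    fix t show "(\<forall>q\<in>V. L t q mod M = r t q) \<and> (\<forall>a b. E a b \<longrightarrow> \<bar>L t b - L t a\<bar> \<le> 1)"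
    proof (induction t)
      case 0 then show ?case using init_mod init_nb L0 by simp
    next
      case (Suc t)
      have IHm: "\<And>q. q \<in> V \<Longrightarrow> L t q mod M = r t q" using Suc.IH by blast
      have IHe: "\<And>a b. E a b \<Longrightarrow> \<bar>L t b - L t a\<bar> \<le> 1" using Suc.IH by blast
      have en: "\<And>a b. a \<in> act t \<Longrightarrow> E a b \<Longrightarrow> L t b = L t a \<or> L t b = L t a + 1"
      proof -
        fix a b assume a: "a \<in> act t" and ab: "E a b"
        have aV: "a \<in> V" and bV: "b \<in> V" using EV[OF ab] by blast+
        have "b \<in> nbrs V E a" using ab bV unfolding nbrs_def by blast
        then have "r t b = r t a \<or> r t b = (r t a + 1) mod M"
          using step_parts(2)[OF st[of t]] a unfolding enabled_def by blast
        then show "L t b = L t a \<or> L t b = L t a + 1"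
          using nb_arith[OF M3 IHe[OF ab]] IHm[OF aV] IHm[OF bV] by metis
      qed
      have m: "\<forall>q\<in>V. L (Suc t) q mod M = r (Suc t) q"
      proof
        fix q assume q: "q \<in> V"
        show "L (Suc t) q mod M = r (Suc t) q"
        proof (cases "q \<in> act t")
          case True
          have "r (Suc t) q = (r t q + 1) mod M" using step_parts(4)[OF st[of t] True] .
          also have "\<dots> = (L t q mod M + 1) mod M" using IHm[OF q] by simp
          also have "\<dots> = (L t q + 1) mod M" by (rule mod_add_left_eq)
          finally show ?thesis using Lsuc[of t q] True by simp
        next
          case False
          then show ?thesis using step_parts(3)[OF st[of t] False] IHm[OF q] Lsuc[of t q] by simp
        qed
      qed
      have e: "\<forall>a b. E a b \<longrightarrow> \<bar>L (Suc t) b - L (Suc t) a\<bar> \<le> 1"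
      proof (intro allI impI)
        fix a b assume ab: "E a b"
        have d: "\<bar>L t b - L t a\<bar> \<le> 1" by (rule IHe[OF ab])
        have c1: "a \<in> act t \<Longrightarrow> L t b = L t a \<or> L t b = L t a + 1" using en ab by blast
        have c2: "b \<in> act t \<Longrightarrow> L t a = L t b \<or> L t a = L t b + 1" using en Esym[OF ab] by blast
        show "\<bar>L (Suc t) b - L (Suc t) a\<bar> \<le> 1"
          unfolding Lsuc using d c1 c2 by (cases "a \<in> act t"; cases "b \<in> act t") auto
      qed
      show ?case using m e by blast
    qed
  qed
  have Lmod: "\<And>t q. q \<in> V \<Longrightarrow> L t q mod M = r t q" using inv1 by blast
  have Lnb: "\<And>t a b. a \<in> act t \<Longrightarrow> E a b \<Longrightarrow> L t b = L t a \<or> L t b = L t a + 1"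
  proof -
    fix t a b assume a: "a \<in> act t" and ab: "E a b"
    have aV: "a \<in> V" and bV: "b \<in> V" using EV[OF ab] by blast+
    have "b \<in> nbrs V E a" using ab bV unfolding nbrs_def by blast
    then have "r t b = r t a \<or> r t b = (r t a + 1) mod M"
      using step_parts(2)[OF st[of t]] a unfolding enabled_def by blast
    moreover have "\<bar>L t b - L t a\<bar> \<le> 1" using inv1 ab by blast
    ultimately show "L t b = L t a \<or> L t b = L t a + 1"
      using nb_arith[OF M3] Lmod[OF aV, of t] Lmod[OF bV, of t] by metis
  qed
  have rmod: "\<And>t q. q \<in> V \<Longrightarrow> r t q mod (rho + 1) = L t q mod (rho + 1)"
    using Lmod mod_mod_cancel[OF Mdvd] by metis
  have B0: "\<And>q. q \<in> V \<Longrightarrow> B q 0 = v0 q"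
    unfolding B_def using ball_0[OF conn] semi
    by (simp add: bigop_def semilattice_set_def semilattice_set.singleton)
  have Wgt: "\<And>q. q \<in> V \<Longrightarrow> init q < W" using init_le U unfolding W_def D_def by fastforce
  have inv2: "\<And>t. \<forall>q\<in>V. W \<le> L t q \<and> L t q \<le> W + rho \<longrightarrow>
      v2 t q = B q (nat (L t q - W)) \<and> v1 t q = B q (nat (L t q - W) - 1)"
  proof -
    fix t show "\<forall>q\<in>V. W \<le> L t q \<and> L t q \<le> W + rho \<longrightarrow>
      v2 t q = B q (nat (L t q - W)) \<and> v1 t q = B q (nat (L t q - W) - 1)"
    proof (induction t)
      case 0 then show ?case using Wgt L0 by force
    next
      case (Suc t)
      have IH: "\<And>q. q \<in> V \<Longrightarrow> W \<le> L t q \<Longrightarrow> L t q \<le> W + rho \<Longrightarrow>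
          v2 t q = B q (nat (L t q - W)) \<and> v1 t q = B q (nat (L t q - W) - 1)" using Suc.IH by blast
      show ?case
      proof (intro ballI impI)
        fix q assume q: "q \<in> V" and rng: "W \<le> L (Suc t) q \<and> L (Suc t) q \<le> W + rho"
        show "v2 (Suc t) q = B q (nat (L (Suc t) q - W)) \<and> v1 (Suc t) q = B q (nat (L (Suc t) q - W) - 1)"
        proof (cases "q \<in> act t")
          case False
          then show ?thesis using step_parts(3)[OF st[of t] False] IH[OF q] rng Lsuc[of t q] by simp
        next
          case True
          have LS: "L (Suc t) q = L t q + 1" using Lsuc[of t q] True by simp
          show ?thesis
          proof (cases "L t q = W - 1")
            case True': True
            have "L t q mod (rho + 1) = (-1 + U * (rho + 1)) mod (rho + 1)" using True' unfolding W_def by simp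
            also have "\<dots> = (-1) mod (rho + 1)" by (rule mod_mult_self1)
            also have "\<dots> = rho" using rho by (simp add: zmod_minus1)
            finally have "r t q mod (rho + 1) = rho" using rmod[OF q, of t] by simp
            then have "v1 (Suc t) q = v0 q \<and> v2 (Suc t) q = v0 q" using step_parts(5)[OF st[of t] True] by blast
            moreover have "nat (L (Suc t) q - W) = 0" using LS True' by simp
            ultimately show ?thesis using B0[OF q] by simp
          next
            case False
            then have lo: "W \<le> L t q" and hi: "L t q < W + rho" using rng LS by auto
            define j where "j = nat (L t q - W)"
            have j: "L t q = W + int j" "int j < rho" using lo hi unfolding j_def by auto
            have "L t q mod (rho + 1) = (int j + U * (rho + 1)) mod (rho + 1)" using j(1) unfolding W_def by simp
            also have "\<dots> = int j mod (rho + 1)" by (rule mod_mult_self1)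
            also have "\<dots> = int j" using j(2) by simp
            finally have "r t q mod (rho + 1) \<noteq> rho" using rmod[OF q, of t] j(2) by simp
            note sp = step_parts(6)[OF st[of t] True this]
            have IHq: "v2 t q = B q j" using IH[OF q lo] hi unfolding j_def by simp
            have nj: "nat (L (Suc t) q - W) = Suc j" using LS j(1) by simp
            have img: "(\<lambda>q'. if r t q' = r t q then v2 t q' else v1 t q') ` nbrs V E q = (\<lambda>q'. B q' j) ` nbrs V E q"
            proof (rule image_cong[OF refl])
              fix q' assume q': "q' \<in> nbrs V E q"
              have Eq: "E q q'" and q'V: "q' \<in> V" using q' unfolding nbrs_def by blast+
              have "L t q' = L t q \<or> L t q' = L t q + 1" using Lnb[OF True Eq] .
              then show "(if r t q' = r t q then v2 t q' else v1 t q') = B q' j"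
              proof
                assume eq: "L t q' = L t q"
                then have "r t q' = r t q" using Lmod[OF q, of t] Lmod[OF q'V, of t] by simp
                then show ?thesis using IH[OF q'V] eq lo hi unfolding j_def by simp
              next
                assume eq: "L t q' = L t q + 1"
                then have "r t q' \<noteq> r t q" using Lmod[OF q, of t] Lmod[OF q'V, of t] neq_arith[OF M3, of "L t q"] by simp
                moreover have "nat (L t q' - W) - 1 = j" using eq j(1) by simp
                ultimately show ?thesis using IH[OF q'V] eq lo hi j by simp
              qed
            qed
            have "v2 (Suc t) q = f (v0 q) (bigop f ((\<lambda>q'. B q' j) ` nbrs V E q))" using sp img by simp
            also have "\<dots> = B q (Suc j)" unfolding B_def
              by (rule B_Suc[OF semi conn finV q nbrs_ne[OF graph conn q], symmetric])
            finally show ?thesis using sp IHq nj by simp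
          qed
        qed
      qed
    qed
  qed
  define tgt where "tgt = W + int k"
  have grow: "\<And>n::nat. \<exists>t. L t p \<ge> init p + int n"
  proof -
    fix n :: nat show "\<exists>t. L t p \<ge> init p + int n"
    proof (induction n)
      case 0 then show ?case using L0 by (intro exI[of _ 0]) simp
    next
      case (Suc n)
      then obtain t where t: "L t p \<ge> init p + int n" by blast
      obtain t' where t': "t' \<ge> t" "p \<in> act t'" using fair p by blast
      have "L t p \<le> L t' p" unfolding L_def by (rule lifted_mono[OF t'(1)])
      moreover have "L (Suc t') p = L t' p + 1" using Lsuc[of t' p] t'(2) by simp
      ultimately show ?case using t by (intro exI[of _ "Suc t'"]) simp
    qed
  qed
  have ex_ge: "\<exists>t. L t p \<ge> tgt"
    using grow[of "nat (tgt - init p)"] by (metis add.commute diff_add_cancel nat_0_le nat_le_0 le_cases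
      order_trans add_le_cancel_left int_nat_eq)
  define t0 where "t0 = (LEAST t. L t p \<ge> tgt)"
  have t0: "L t0 p \<ge> tgt" unfolding t0_def using ex_ge by (rule LeastI_ex)
  have ptgt: "init p < tgt" using Wgt[OF p] unfolding tgt_def by simp
  have "t0 \<noteq> 0" using t0 ptgt L0 by (metis not_less)
  then obtain s where s: "t0 = Suc s" by (cases t0) auto
  have "\<not> L s p \<ge> tgt" using not_less_Least[of s "\<lambda>t. L t p \<ge> tgt"] s unfolding t0_def by simp
  moreover have "L t0 p \<le> L s p + 1" using Lsuc[of s p] s by simp
  ultimately have "L t0 p = tgt" using t0 by simp
  then have exT: "\<exists>t. L t p = tgt" by blast
  define T where "T = first_time init act p tgt"
  have LT: "L T p = tgt" unfolding T_def first_time_def L_def[symmetric] using exT by (rule LeastI_ex)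
  have res: "v2 T p = B p k \<and> v1 T p = B p (k - 1)"
    using inv2[of T] p LT k unfolding tgt_def by simp
  show ?thesis unfolding Let_def init_def[symmetric] T_def[unfolded tgt_def W_def, symmetric]
    using res unfolding B_def by simp
qed

end
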